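(* Let $k\neq r$ be jobs with $t_r\le t_k$, and suppose there is a job $j$ such that both $(j,k)$ and $(j,r)$ are red pairs. Let $N^-(x)=\{i:(i,x)\text{ is a red pair}\}$. Then: (a) for every $j'\in N^-(k)$ with $m_{j'}\le m_j$, we have $j'\in N^-(r)$ (so $N^-(k)\cap N^-(r)$ is an initial segment of $N^-(k)$ ordered by $m$); (b) there is no job $j''\in N^-(r)$ with $m_{j''}>m_{j'}$ for all $j'\in N^-(k)$.
   Context: Jobs $j$ have test time $t_j\ge0$ and processing time $p_j\ge0$; $m_j=\max\{t_j,p_j\}$, $\sigma_j=t_j+p_j$. Standing assumption (general position): no two of the $3n$ numbers $t_j,p_j,\sigma_j$ ($j=1,\dots,n$) are equal. Fix constants $\mu>1$ and $0<\nu<1$ with $\mu\nu>1$ and $1+\frac1\mu\le\nu+\nu^2$. A job $j$ is imbalanced if $m_j\ge\mu\min\{t_j,p_j\}$. For distinct jobs $j,k$, the ordered pair $(j,k)$ is a red pair if $j$ is imbalanced, $m_j\ge t_k\ge\nu m_j$, and $p_k\ge\nu t_k$. *)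

theory Defs
  imports Main Complex_Main
begin

text \<open>Jobs are elements of a finite set J; t and p give test and processing times.\<close>

definition mjob :: "('a \<Rightarrow> real) \<Rightarrow> ('a \<Rightarrow> real) \<Rightarrow> 'a \<Rightarrow> real" where
  "mjob t p j = max (t j) (p j)"

definition sigjob :: "('a \<Rightarrow> real) \<Rightarrow> ('a \<Rightarrow> real) \<Rightarrow> 'a \<Rightarrow> real" where
  "sigjob t p j = t j + p j"

definition general_position :: "'a set \<Rightarrow> ('a \<Rightarrow> real) \<Rightarrow> ('a \<Rightarrow> real) \<Rightarrow> bool" where
  "general_position J t p \<longleftrightarrow>
     (\<forall>i\<in>J. \<forall>j\<in>J.
        (i \<noteq> j \<longrightarrow> t i \<noteq> t j \<and> p i \<noteq> p j \<and> sigjob t p i \<noteq> sigjob t p j)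
        \<and> t i \<noteq> p j \<and> t i \<noteq> sigjob t p j \<and> p i \<noteq> sigjob t p j)"

definition imbalanced :: "real \<Rightarrow> ('a \<Rightarrow> real) \<Rightarrow> ('a \<Rightarrow> real) \<Rightarrow> 'a \<Rightarrow> bool" where
  "imbalanced \<mu> t p j \<longleftrightarrow> mjob t p j \<ge> \<mu> * min (t j) (p j)"

definition red_pair :: "real \<Rightarrow> real \<Rightarrow> ('a \<Rightarrow> real) \<Rightarrow> ('a \<Rightarrow> real) \<Rightarrow> 'a \<Rightarrow> 'a \<Rightarrow> bool" where
  "red_pair \<mu> \<nu> t p j k \<longleftrightarrow>
     j \<noteq> k \<and> imbalanced \<mu> t p j \<and> mjob t p j \<ge> t k \<and> t k \<ge> \<nu> * mjob t p j
     \<and> p k \<ge> \<nu> * t k"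

definition red_in :: "'a set \<Rightarrow> real \<Rightarrow> real \<Rightarrow> ('a \<Rightarrow> real) \<Rightarrow> ('a \<Rightarrow> real) \<Rightarrow> 'a \<Rightarrow> 'a set" where
  "red_in J \<mu> \<nu> t p x = {i \<in> J. red_pair \<mu> \<nu> t p i x}"

end

theory Submission
  imports Defs
begin

theorem mainTheorem7:
  fixes J :: "'a set" and t p :: "'a \<Rightarrow> real" and \<mu> \<nu> :: real and j k r :: 'a
  assumes finJ: "finite J"
    and nonneg: "\<forall>i\<in>J. t i \<ge> 0 \<and> p i \<ge> 0"
    and gp: "general_position J t p"
    and mu: "\<mu> > 1" and nu0: "0 < \<nu>" and nu1: "\<nu> < 1" and munu: "\<mu> * \<nu> > 1"
    and ineq: "1 + 1 / \<mu> \<le> \<nu> + \<nu>\<^sup>2"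
    and jobs: "j \<in> J" "k \<in> J" "r \<in> J"
    and kr: "k \<noteq> r" and tkr: "t r \<le> t k"
    and redk: "red_pair \<mu> \<nu> t p j k" and redr: "red_pair \<mu> \<nu> t p j r"
  shows "(\<forall>j'\<in>red_in J \<mu> \<nu> t p k. mjob t p j' \<le> mjob t p j \<longrightarrow> j' \<in> red_in J \<mu> \<nu> t p r)
       \<and> \<not> (\<exists>j''\<in>red_in J \<mu> \<nu> t p r. \<forall>j'\<in>red_in J \<mu> \<nu> t p k. mjob t p j'' > mjob t p j')"

proof -
  have tkne: "t k \<noteq> t r" using gp kr jobs unfolding general_position_def by blast
  have rk: "j \<noteq> k" "imbalanced \<mu> t p j" "mjob t p j \<ge> t k" "t k \<ge> \<nu> * mjob t p j" "p k \<ge> \<nu> * t k"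
    using redk unfolding red_pair_def by auto
  have rr: "j \<noteq> r" "mjob t p j \<ge> t r" "t r \<ge> \<nu> * mjob t p j" "p r \<ge> \<nu> * t r"
    using redr unfolding red_pair_def by auto
  have tlt: "t r < t k" using tkr tkne by simp
  have mjpos: "mjob t p j > 0"
  proof -
    have "mjob t p j * (1 - \<nu>) > 0" using tlt rk(3) rr(3) by (simp add: algebra_simps)
    thus ?thesis using nu1 by (simp add: zero_less_mult_iff)
  qed
  have trpos: "t r > 0" using rr(3) mjpos nu0 by (smt (verit) mult_pos_pos)
  have tkpos: "t k > 0" using trpos tlt by simp
  have A: "\<forall>j'\<in>red_in J \<mu> \<nu> t p k. mjob t p j' \<le> mjob t p j \<longrightarrow> j' \<in> red_in J \<mu> \<nu> t p r"
  proof (intro ballI impI)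
    fix j' assume j1: "j' \<in> red_in J \<mu> \<nu> t p k" and j2: "mjob t p j' \<le> mjob t p j"
    have h: "j' \<in> J" "imbalanced \<mu> t p j'" "mjob t p j' \<ge> t k" "t k \<ge> \<nu> * mjob t p j'"
      using j1 unfolding red_in_def red_pair_def by auto
    have ne: "j' \<noteq> r"
    proof
      assume e: "j' = r"
      have im: "mjob t p r \<ge> \<mu> * min (t r) (p r)" using h(2) e unfolding imbalanced_def by simp
      have mr: "mjob t p r \<le> mjob t p j" using j2 e by simp
      show False
      proof (cases "p r \<ge> t r")
        case True
        hence "mjob t p r \<ge> \<mu> * t r" using im by (simp add: min_def)
        moreover have "\<mu> * t r \<ge> \<mu> * (\<nu> * mjob t p j)" using rr(3) mu by simp
        moreover have "\<mu> * (\<nu> * mjob t p j) > mjob t p j" using munu mjpos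
          by (metis mult.assoc mult.left_neutral mult_strict_right_mono)
        ultimately show False using mr by linarith
      next
        case False
        hence m: "mjob t p r = t r" "min (t r) (p r) = p r" unfolding mjob_def by auto
        have "t r \<ge> \<mu> * p r" using im m by simp
        moreover have "\<mu> * p r \<ge> \<mu> * (\<nu> * t r)" using rr(4) mu by simp
        moreover have "\<mu> * (\<nu> * t r) > t r" using munu trpos
          by (metis mult.assoc mult.left_neutral mult_strict_right_mono)
        ultimately show False by linarith
      qed
    qed
    have "\<nu> * mjob t p j' \<le> \<nu> * mjob t p j" using j2 nu0 by simp
    then show "j' \<in> red_in J \<mu> \<nu> t p r"
      unfolding red_in_def red_pair_def using h ne tlt rr j2 by auto
  qed
  have B: "\<not> (\<exists>j''\<in>red_in J \<mu> \<nu> t p r. \<forall>j'\<in>red_in J \<mu> \<nu> t p k. mjob t p j'' > mjob t p j')"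
  proof
    assume "\<exists>j''\<in>red_in J \<mu> \<nu> t p r. \<forall>j'\<in>red_in J \<mu> \<nu> t p k. mjob t p j'' > mjob t p j'"
    then obtain q where q: "q \<in> red_in J \<mu> \<nu> t p r"
      and qa: "\<forall>j'\<in>red_in J \<mu> \<nu> t p k. mjob t p q > mjob t p j'" by blast
    have jin: "j \<in> red_in J \<mu> \<nu> t p k" using redk jobs unfolding red_in_def by auto
    have gt: "mjob t p q > mjob t p j" using qa jin by blast
    have h: "q \<in> J" "imbalanced \<mu> t p q" "mjob t p q \<ge> t r" "t r \<ge> \<nu> * mjob t p q"
      using q unfolding red_in_def red_pair_def by auto
    have ne: "q \<noteq> k"
    proof
      assume e: "q = k"
      have im: "mjob t p k \<ge> \<mu> * min (t k) (p k)" using h(2) e unfolding imbalanced_def by simp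
      have "mjob t p k > t k" using gt e rk(3) by simp
      hence m: "mjob t p k = p k" "min (t k) (p k) = t k" unfolding mjob_def by auto
      have "p k \<ge> \<mu> * t k" using im m by simp
      hence "\<nu> * p k \<ge> \<nu> * (\<mu> * t k)" using nu0 by simp
      moreover have "\<nu> * (\<mu> * t k) > t k" using munu tkpos
        by (metis mult.assoc mult.commute mult.left_neutral mult_strict_right_mono)
      moreover have "t r \<ge> \<nu> * p k" using h(4) e m by simp
      ultimately show False using tlt by linarith
    qed
    have "\<nu> * mjob t p q \<le> t k" using h(4) tlt by linarith
    hence "q \<in> red_in J \<mu> \<nu> t p k"
      unfolding red_in_def red_pair_def using h ne gt rk by auto
    with qa show False by blast
  qed
  show ?thesis using A B by blast
qed

end
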